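(* Consider $(\mathbb R^2,d_{\rm e},\mu)$ with $\mu=\lambda_1+\lambda_2$, where $\lambda_1$ is one-dimensional Lebesgue measure on the segment $A=[0,1]\times\{0\}$ and $\lambda_2$ is two-dimensional Lebesgue measure on $\mathbb R^2$. Then there exists $f\in L^1(\mu)$ with compact support such that $\{x\in\mathbb R^2:\mathcal Mf(x)=\infty\}=A$. In particular the noncentered maximal operator $\mathcal M$ does not possess the dichotomy property for this space.
   Context: $d_{\rm e}$ is the Euclidean metric. $\mathcal Mf(x)=\sup_{B\ni x}\mu(B)^{-1}\int_B|f|d\mu$, the supremum over open Euclidean balls $B$ containing $x$. $\mathcal M$ possesses the dichotomy property if for every $f$ integrable on every ball either $\mu(\{\mathcal Mf=\infty\})=0$ or $\mathcal Mf\equiv\infty$. *)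

theory Defs
  imports "HOL-Analysis.Analysis"
begin

text \<open>The plane R^2 is modelled as real \<times> real; its metric (dist) is the Euclidean one.\<close>

definition segA :: "(real \<times> real) set" where
  "segA = (\<lambda>t. (t, 0)) ` {0..1}"

definition lambda1 :: "(real \<times> real) measure" where
  "lambda1 = distr (restrict_space lborel {0..1}) borel (\<lambda>t::real. (t, 0::real))"

definition mu :: "(real \<times> real) measure" where
  "mu = measure_of UNIV (sets borel)
          (\<lambda>S. emeasure (lborel :: (real \<times> real) measure) S + emeasure lambda1 S)"

definition maxfun :: "('a::metric_space) measure \<Rightarrow> ('a \<Rightarrow> real) \<Rightarrow> 'a \<Rightarrow> ennreal" where
  "maxfun M f x = (SUP cr \<in> {(c, r). 0 < r \<and> x \<in> ball c r}.
      (\<integral>\<^sup>+ y \<in> ball (fst cr) (snd cr). ennreal \<bar>f y\<bar> \<partial>M) / emeasure M (ball (fst cr) (snd cr)))"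

definition dichotomy :: "('a::metric_space) measure \<Rightarrow> bool" where
  "dichotomy M \<longleftrightarrow> (\<forall>f. (\<forall>c r. set_integrable M (ball c r) f) \<longrightarrow>
      emeasure M {x \<in> space M. maxfun M f x = \<infinity>} = 0 \<or> (\<forall>x. maxfun M f x = \<infinity>))"

end

theory Submission
  imports Defs
begin



lemma sets_lambda1[simp]: "sets lambda1 = sets borel"
  by (simp add: lambda1_def)
lemma space_lambda1[simp]: "space lambda1 = UNIV"
  by (simp add: lambda1_def)

lemma emeasure_lambda1:
  assumes "B \<in> sets borel"
  shows "emeasure lambda1 B = emeasure lborel {t\<in>{0..1}. (t,0::real) \<in> B}"
proof -
  have m: "(\<lambda>t::real. (t, 0::real)) \<in> measurable (restrict_space lborel {0..1}) borel"
    by (intro measurable_restrict_space1) simp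
  have "emeasure lambda1 B = emeasure (restrict_space lborel {0..1}) ((\<lambda>t::real. (t, 0::real)) -` B \<inter> {0..1})"
    unfolding lambda1_def using assms m by (subst emeasure_distr) auto
  also have "\<dots> = emeasure lborel ((\<lambda>t::real. (t, 0::real)) -` B \<inter> {0..1})"
    by (rule emeasure_restrict_space) auto
  also have "((\<lambda>t::real. (t, 0::real)) -` B \<inter> {0..1}) = {t\<in>{0..1}. (t,0::real) \<in> B}"
    by auto
  finally show ?thesis .
qed

lemma mu_ms:
  "sigma_algebra UNIV (sets (borel :: (real\<times>real) measure))"
  "positive (sets borel) (\<lambda>S. emeasure (lborel :: (real \<times> real) measure) S + emeasure lambda1 S)"
  "countably_additive (sets borel) (\<lambda>S. emeasure (lborel :: (real \<times> real) measure) S + emeasure lambda1 S)"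
proof -
  show "sigma_algebra UNIV (sets (borel :: (real\<times>real) measure))"
    by (metis sets.sigma_algebra_axioms space_borel)
  show "positive (sets borel) (\<lambda>S. emeasure (lborel :: (real \<times> real) measure) S + emeasure lambda1 S)"
    by (simp add: positive_def)
  show "countably_additive (sets borel) (\<lambda>S. emeasure (lborel :: (real \<times> real) measure) S + emeasure lambda1 S)"
    unfolding countably_additive_def
  proof (intro allI impI)
    fix A :: "nat \<Rightarrow> (real\<times>real) set" assume "range A \<subseteq> sets borel" "disjoint_family A" "\<Union> (range A) \<in> sets borel"
    then show "(\<Sum>i. emeasure lborel (A i) + emeasure lambda1 (A i)) = emeasure lborel (\<Union> (range A)) + emeasure lambda1 (\<Union> (range A))"
      by (simp add: suminf_add[OF summableI summableI, symmetric] suminf_emeasure)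
  qed
qed

lemma sets_mu[simp]: "sets mu = sets borel"
  unfolding mu_def by (rule sigma_algebra.sets_measure_of_eq[OF mu_ms(1)])
lemma space_mu[simp]: "space mu = UNIV"
  unfolding mu_def by simp
lemma emeasure_mu: "S \<in> sets borel \<Longrightarrow> emeasure mu S = emeasure lborel S + emeasure lambda1 S"
  unfolding mu_def by (rule emeasure_measure_of_sigma[OF mu_ms])

lemma measurable_mu[simp]: "measurable mu N = measurable borel N"
  by (intro measurable_cong_sets) auto

lemma measurable_lambda1[simp]: "measurable lambda1 N = measurable borel N"
  by (intro measurable_cong_sets) auto

lemma nn_integral_mu:
  assumes "g \<in> borel_measurable borel"
  shows "integral\<^sup>N mu g = integral\<^sup>N lborel g + integral\<^sup>N lambda1 g"
  using assms
proof induct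
  case (cong f g) then show ?case
    by (metis (no_types, lifting) UNIV_I nn_integral_cong space_borel space_lborel space_mu space_lambda1)
next
  case (set A) then show ?case
    by (simp add: emeasure_mu)
next
  case (mult u c) then show ?case
    by (simp add: nn_integral_cmult distrib_left)
next
  case (add u v) then show ?case
    by (simp add: nn_integral_add add_ac)
next
  case (seq U)
  have eq: "(SUP i. U i) = (\<lambda>x. SUP i. U i x)" by (auto simp: image_comp)
  have "integral\<^sup>N mu (\<lambda>x. SUP i. U i x) = (SUP i. integral\<^sup>N mu (U i))"
    using seq by (intro nn_integral_monotone_convergence_SUP) auto
  also have "\<dots> = (SUP i. integral\<^sup>N lborel (U i) + integral\<^sup>N lambda1 (U i))"
    using seq by simp
  also have "\<dots> = (SUP i. integral\<^sup>N lborel (U i)) + (SUP i. integral\<^sup>N lambda1 (U i))"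
  proof (rule ennreal_SUP_add)
    show "incseq (\<lambda>i. integral\<^sup>N lborel (U i))" "incseq (\<lambda>i. integral\<^sup>N lambda1 (U i))"
      using seq(4) by (auto simp: incseq_def le_fun_def intro!: nn_integral_mono)
  qed
  also have "\<dots> = integral\<^sup>N lborel (\<lambda>x. SUP i. U i x) + integral\<^sup>N lambda1 (\<lambda>x. SUP i. U i x)"
  proof -
    have "integral\<^sup>N lborel (\<lambda>x. SUP i. U i x) = (SUP i. integral\<^sup>N lborel (U i))"
      using seq(1,4) by (intro nn_integral_monotone_convergence_SUP) auto
    moreover have "integral\<^sup>N lambda1 (\<lambda>x. SUP i. U i x) = (SUP i. integral\<^sup>N lambda1 (U i))"
      using seq(1,4) by (intro nn_integral_monotone_convergence_SUP) auto
    ultimately show ?thesis by simp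
  qed
  finally have X: "integral\<^sup>N mu (\<lambda>x. SUP i. U i x) = integral\<^sup>N lborel (\<lambda>x. SUP i. U i x) + integral\<^sup>N lambda1 (\<lambda>x. SUP i. U i x)" .
  show ?case unfolding eq by (rule X)
qed



definition G :: "real \<Rightarrow> real" where
  "G b = (if 0 < b \<and> b \<le> 1 then 1 / sqrt b else 0)"

definition F :: "real \<times> real \<Rightarrow> real" where
  "F y = (if 0 \<le> fst y \<and> fst y \<le> 1 then G (snd y) else 0)"

lemma G_nonneg: "0 \<le> G b" by (simp add: G_def)
lemma F_nonneg: "0 \<le> F y" by (simp add: F_def G_nonneg)

lemma G_alt: "G b = indicator {0<..1} b *\<^sub>R b powr (-1/2)"
  by (auto simp: G_def indicator_def powr_minus_divide powr_half_sqrt)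

lemma G_meas[measurable]: "G \<in> borel_measurable borel"
  unfolding G_alt[abs_def] by measurable

lemma F_alt: "F y = indicator {0..1} (fst y) * G (snd y)"
  by (simp add: F_def indicator_def)

lemma F_meas[measurable]: "F \<in> borel_measurable borel"
proof -
  have c1: "snd \<in> borel_measurable (borel :: (real\<times>real) measure)"
    by (intro borel_measurable_continuous_onI continuous_intros)
  have 1: "(\<lambda>y::real\<times>real. G (snd y)) \<in> borel_measurable borel"
    by (rule measurable_compose[OF c1 G_meas])
  have "{0..1} \<times> UNIV \<in> sets (borel :: (real\<times>real) measure)"
    by (intro borel_closed closed_Times) auto
  then have 2: "(\<lambda>y::real\<times>real. indicator ({0..1} \<times> UNIV) y :: real) \<in> borel_measurable borel"
    by simp
  have "F = (\<lambda>y. indicator ({0..1} \<times> UNIV) y * G (snd y))"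
    by (auto simp: F_alt indicator_def fun_eq_iff)
  then show ?thesis using borel_measurable_times[OF 2 1] by simp
qed

lemma F_meas_e: "(\<lambda>y. ennreal (F y)) \<in> borel_measurable borel"
  by (rule measurable_compose[OF F_meas measurable_ennreal])

lemma G_int: "(\<integral>\<^sup>+ b. ennreal (G b) \<partial>lborel) < \<infinity>"
proof -
  have "integrable lebesgue (\<lambda>x. indicat_real {0<..1} x *\<^sub>R x powr (-1/2::real))"
    by (intro nonnegative_absolutely_integrable_1 [unfolded set_integrable_def] integrable_on_powr_from_0') auto
  then have "integrable lborel (\<lambda>x. indicat_real {0<..1} x *\<^sub>R x powr (-1/2::real))"
    by (subst (asm) integrable_completion) auto
  then have "integrable lborel G" unfolding G_alt[abs_def] .
  from integrableD(2)[OF this] show ?thesis by (simp add: less_top)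
qed

lemma F_int_lborel: "(\<integral>\<^sup>+ y. ennreal (F y) \<partial>lborel) < \<infinity>"
proof -
  have "(\<integral>\<^sup>+ y. ennreal (F y) \<partial>(lborel :: (real\<times>real) measure)) = (\<integral>\<^sup>+ y. ennreal (F y) \<partial>(lborel \<Otimes>\<^sub>M lborel))"
    by (simp add: lborel_prod)
  also have "\<dots> = (\<integral>\<^sup>+ a. \<integral>\<^sup>+ b. ennreal (F (a, b)) \<partial>lborel \<partial>lborel)"
    by (rule lborel.nn_integral_fst[symmetric]) (simp add: lborel_prod F_meas_e)
  also have "\<dots> = (\<integral>\<^sup>+ a. indicator {0..1::real} a * (\<integral>\<^sup>+ b. ennreal (G b) \<partial>lborel) \<partial>lborel)"
  proof -
    have eq: "(\<integral>\<^sup>+ b. ennreal (F (a, b)) \<partial>lborel) = indicator {0..1} a * (\<integral>\<^sup>+ b. ennreal (G b) \<partial>lborel)" for a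
    proof -
    have "(\<lambda>b. ennreal (F (a,b))) = (\<lambda>b. indicator {0..1} a * ennreal (G b))"
      by (auto simp: F_alt indicator_def fun_eq_iff)
    then show ?thesis
      by (simp add: nn_integral_cmult)
    qed
    show ?thesis by (simp only: eq)
  qed
  also have "\<dots> = (\<integral>\<^sup>+ b. ennreal (G b) \<partial>lborel)"
    by (simp add: nn_integral_multc mult.commute)
  finally show ?thesis using G_int by simp
qed

lemma F_int_lambda1: "(\<integral>\<^sup>+ y. ennreal (F y) \<partial>lambda1) = 0"
proof -
  have "(\<integral>\<^sup>+ y. ennreal (F y) \<partial>lambda1) = (\<integral>\<^sup>+ x. ennreal (F (x, 0)) \<partial>restrict_space lborel {0..1})"
    unfolding lambda1_def by (subst nn_integral_distr) (auto intro: measurable_restrict_space1 F_meas_e)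
  also have "\<dots> = 0"
  proof -
    have "\<And>x. F (x, 0) = 0" by (simp add: F_def G_def)
    then show ?thesis by simp
  qed
  finally show ?thesis .
qed

lemma F_int_mu: "(\<integral>\<^sup>+ y. ennreal (F y) \<partial>mu) < \<infinity>"
  using F_int_lborel F_int_lambda1 by (subst nn_integral_mu) auto

lemma F_integrable: "integrable mu F"
  by (rule integrableI_bounded) (use F_int_mu F_nonneg in auto)




lemma segA_iff: "x \<in> segA \<longleftrightarrow> snd x = 0 \<and> 0 \<le> fst x \<and> fst x \<le> 1"
  by (cases x) (auto simp: segA_def)

lemma segA_compact: "compact segA"
  unfolding segA_def by (intro compact_continuous_image continuous_intros) auto

lemma segA_closed: "closed segA" using segA_compact compact_imp_closed by blast
lemma segA_ne: "segA \<noteq> {}" by (auto simp: segA_def)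
lemma segA_sets: "segA \<in> sets borel" using segA_closed by simp

lemma rect_lborel:
  assumes "a \<le> b" "c \<le> d"
  shows "emeasure (lborel :: (real\<times>real) measure) ({a..b} \<times> {c..d}) = ennreal ((b-a)*(d-c))"
proof -
  have "emeasure (lborel :: (real\<times>real) measure) ({a..b} \<times> {c..d}) = emeasure (lborel \<Otimes>\<^sub>M lborel) ({a..b} \<times> {c..d})"
    by (simp add: lborel_prod)
  also have "\<dots> = emeasure lborel {a..b} * emeasure lborel {c..d}"
    by (rule lborel.emeasure_pair_measure_Times) auto
  also have "\<dots> = ennreal ((b-a)*(d-c))"
    using assms by (simp add: ennreal_mult)
  finally show ?thesis .
qed

lemma sq_le: fixes u s :: real assumes "\<bar>u\<bar> \<le> s" shows "u^2 \<le> s^2"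
proof -
  have "\<bar>u\<bar> \<le> \<bar>s\<bar>" using assms by linarith
  then show ?thesis using abs_le_square_iff by blast
qed

lemma sq_le': fixes u s :: real assumes "u^2 \<le> s^2" "0 \<le> s" shows "\<bar>u\<bar> \<le> s"
  using abs_le_square_iff[of u s] assms by simp

lemma div_ge:
  fixes a b :: ennreal
  assumes "ennreal A \<le> a" "b \<le> ennreal B" "b \<noteq> 0" "0 \<le> A"
  shows "ennreal (A / B) \<le> a / b"
proof -
  have "b \<noteq> top" using assms(2) by (metis ennreal_neq_top top_unique)
  then obtain b' where b': "b = ennreal b'" "0 \<le> b'" by (cases b) auto
  have "b' > 0" using assms(3) b' by (auto simp: less_le)
  have "B > 0"
  proof (rule ccontr)
    assume "\<not> B > 0" then have "ennreal B = 0" by (simp add: ennreal_eq_0_iff)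
    then show False using assms(2,3) by simp
  qed
  have "b' \<le> B" using assms(2) b' \<open>B > 0\<close> by (simp add: ennreal_le_iff)
  have "ennreal (A / B) \<le> ennreal (A / b')"
    using \<open>b' > 0\<close> \<open>b' \<le> B\<close> assms(4) by (intro ennreal_leI divide_left_mono) auto
  also have "\<dots> = ennreal A / b" using b' \<open>b' > 0\<close> assms(4) by (simp add: divide_ennreal)
  also have "\<dots> \<le> a / b" by (rule divide_right_mono_ennreal[OF assms(1)])
  finally show ?thesis .
qed

lemma div_le:
  fixes a b :: ennreal
  assumes "a \<le> ennreal A" "ennreal B \<le> b" "0 < B" "0 \<le> A"
  shows "a / b \<le> ennreal (A / B)"
proof (cases "b = top")
  case True then show ?thesis by simp
next
  case False
  then obtain b' where b': "b = ennreal b'" "0 \<le> b'" by (cases b) auto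
  have "B \<le> b'" using assms(2,3) b' by simp
  have "a / b \<le> ennreal A / b" by (rule divide_right_mono_ennreal[OF assms(1)])
  also have "\<dots> = ennreal (A / b')" using b' \<open>B \<le> b'\<close> assms by (simp add: divide_ennreal)
  also have "\<dots> \<le> ennreal (A / B)"
    using \<open>B \<le> b'\<close> assms by (intro ennreal_leI divide_left_mono) auto
  finally show ?thesis .
qed

lemma dist_sq: "dist (a::real\<times>real) b < r \<longleftrightarrow> 0 < r \<and> (fst a - fst b)^2 + (snd a - snd b)^2 < r^2"
proof -
  have "dist a b = sqrt ((fst a - fst b)^2 + (snd a - snd b)^2)"
    by (cases a, cases b) (simp add: dist_Pair_Pair dist_real_def)
  moreover have "sqrt Q < r \<longleftrightarrow> 0 < r \<and> Q < r^2" if "0 \<le> Q" for Q :: real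
  proof
    assume h: "sqrt Q < r"
    then have "0 < r" using real_sqrt_ge_zero[OF that] by linarith
    moreover have "(sqrt Q)^2 < r^2" using h real_sqrt_ge_zero[OF that] by (intro power_strict_mono) auto
    ultimately show "0 < r \<and> Q < r^2" using that by simp
  next
    assume h: "0 < r \<and> Q < r^2"
    then have "sqrt Q < sqrt (r^2)" by (intro real_sqrt_less_mono) auto
    then show "sqrt Q < r" using h by simp
  qed
  ultimately show ?thesis by simp
qed

lemma mu_ball_ge: assumes "0 < r" shows "ennreal (r^2) \<le> emeasure mu (ball c r)"
proof -
  let ?S = "{fst c - r/2..fst c + r/2} \<times> {snd c - r/2..snd c + r/2}"
  have sub: "?S \<subseteq> ball c r"
  proof
    fix y assume "y \<in> ?S"
    then have "\<bar>fst c - fst y\<bar> \<le> r/2" "\<bar>snd c - snd y\<bar> \<le> r/2" by (auto simp: mem_Times_iff abs_if)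
    then have "(fst c - fst y)^2 \<le> (r/2)^2" "(snd c - snd y)^2 \<le> (r/2)^2"
      by (auto intro: sq_le)
    moreover have "(r/2)^2 = r^2/4" by (simp add: power_divide)
    moreover have "0 < r^2" using assms by simp
    ultimately have "(fst c - fst y)^2 + (snd c - snd y)^2 < r^2" by linarith
    then show "y \<in> ball c r" using assms by (simp add: dist_sq)
  qed
  have "ennreal (r^2) = emeasure lborel ?S" using assms by (simp add: rect_lborel power2_eq_square)
  also have "\<dots> \<le> emeasure lborel (ball c r)" by (rule emeasure_mono[OF sub]) simp
  also have "\<dots> \<le> emeasure mu (ball c r)" by (simp add: emeasure_mu)
  finally show ?thesis .
qed

lemma lambda1_UNIV: "emeasure lambda1 UNIV = 1"
proof -
  have "{t\<in>{0..1}. (t,0::real) \<in> UNIV} = {0..1::real}" by auto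
  then show ?thesis by (simp add: emeasure_lambda1)
qed

lemma mu_ball_fin: "emeasure mu (ball c r) < \<infinity>"
proof -
  let ?S = "{fst c - r..fst c + r} \<times> {snd c - r..snd c + r}"
  show ?thesis
  proof (cases "r > 0")
    case False then have e: "ball c r = {}" by auto
    show ?thesis by (subst e) simp
  next
    case True
    have sub: "ball c r \<subseteq> ?S"
    proof
      fix y assume "y \<in> ball c r"
      then have "(fst c - fst y)^2 + (snd c - snd y)^2 < r^2" by (simp add: dist_sq)
      then have "(fst c - fst y)^2 \<le> r^2" "(snd c - snd y)^2 \<le> r^2"
        by (smt (verit) zero_le_power2)+
      then have "\<bar>fst c - fst y\<bar> \<le> r" "\<bar>snd c - snd y\<bar> \<le> r" using True by (auto intro: sq_le')
      then show "y \<in> ?S" by (cases y) auto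
    qed
    have "emeasure lborel (ball c r) \<le> emeasure lborel ?S" by (rule emeasure_mono[OF sub]) (simp only: sets_lborel, intro borel_closed closed_Times, auto)
    also have "\<dots> < \<infinity>" using True by (simp add: rect_lborel)
    finally have 1: "emeasure lborel (ball c r) < \<infinity>" .
    have "emeasure lambda1 (ball c r) \<le> emeasure lambda1 UNIV" by (rule emeasure_mono) auto
    then have 2: "emeasure lambda1 (ball c r) < \<infinity>" using lambda1_UNIV by (simp add: le_less_trans)
    show ?thesis using 1 2 by (simp add: emeasure_mu)
  qed
qed




lemma off_bound:
  assumes "x \<notin> segA"
  shows "maxfun mu F x < \<infinity>"
proof -
  define d where "d = infdist x segA"
  have d: "d > 0" unfolding d_def using infdist_pos_not_in_closed[OF segA_closed segA_ne assms] .
  define K where "K = 1 / sqrt (d/2)"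
  have K0: "0 \<le> K" using d by (simp add: K_def)
  have Fb: "F y \<le> K" if "dist x y < d/2" for y
  proof (cases "F y = 0")
    case True then show ?thesis using K0 by simp
  next
    case False
    then have y: "0 \<le> fst y" "fst y \<le> 1" "0 < snd y" "snd y \<le> 1" and Fy: "F y = 1/sqrt(snd y)"
      by (auto simp: F_def G_def split: if_splits)
    have "(fst y, 0) \<in> segA" using y by (simp add: segA_iff)
    then have "d \<le> dist x (fst y, 0)" unfolding d_def by (rule infdist_le)
    also have "\<dots> \<le> dist x y + dist y (fst y, 0)" by (rule dist_triangle)
    also have "dist y (fst y, 0) = snd y" using y by (cases y) (simp add: dist_Pair_Pair dist_real_def)
    finally have "d/2 < snd y" using that by linarith
    then have "sqrt (d/2) \<le> sqrt (snd y)" by (intro real_sqrt_le_mono) linarith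
    then show ?thesis unfolding Fy K_def using d by (intro frac_le) auto
  qed
  obtain I where I: "(\<integral>\<^sup>+ y. ennreal (F y) \<partial>mu) = ennreal I" "0 \<le> I"
    using F_int_mu by (cases "\<integral>\<^sup>+ y. ennreal (F y) \<partial>mu") auto
  define C where "C = max K (I / (d/4)^2)"
  have "maxfun mu F x \<le> ennreal C"
    unfolding maxfun_def
  proof (rule SUP_least)
    fix cr assume "cr \<in> {(c, r). 0 < r \<and> x \<in> ball c r}"
    then obtain c r where cr: "cr = (c,r)" "0 < r" "x \<in> ball c r" by auto
    have pos: "ennreal (r^2) \<le> emeasure mu (ball c r)" by (rule mu_ball_ge[OF \<open>0<r\<close>])
    have r2: "0 < r^2" using cr by simp
    have "(\<integral>\<^sup>+ y \<in> ball c r. ennreal \<bar>F y\<bar> \<partial>mu) / emeasure mu (ball c r) \<le> ennreal C"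
    proof (cases "r \<le> d/4")
      case True
      obtain m where m: "emeasure mu (ball c r) = ennreal m" "0 \<le> m"
        using mu_ball_fin[of c r] by (cases "emeasure mu (ball c r)") auto
      have "r^2 \<le> m" using pos m r2 by (simp add: ennreal_le_iff2)
      then have m0: "0 < m" using r2 by linarith
      have "(\<integral>\<^sup>+ y \<in> ball c r. ennreal \<bar>F y\<bar> \<partial>mu) \<le> (\<integral>\<^sup>+ y. ennreal K * indicator (ball c r) y \<partial>mu)"
      proof (intro nn_integral_mono)
        fix y
        show "ennreal \<bar>F y\<bar> * indicator (ball c r) y \<le> ennreal K * indicator (ball c r) y"
        proof (cases "y \<in> ball c r")
          case True
          have "dist x y \<le> dist x c + dist c y" by (rule dist_triangle)
          also have "\<dots> < 2 * r" using True cr by (simp add: dist_commute)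
          finally have "dist x y < d/2" using \<open>r \<le> d/4\<close> by linarith
          then show ?thesis using True Fb F_nonneg by (simp add: ennreal_leI)
        qed simp
      qed
      also have "\<dots> = ennreal K * emeasure mu (ball c r)"
        by (rule nn_integral_cmult_indicator) simp
      also have "\<dots> = ennreal (K * m)" using m K0 by (simp add: ennreal_mult)
      finally have "(\<integral>\<^sup>+ y \<in> ball c r. ennreal \<bar>F y\<bar> \<partial>mu) / emeasure mu (ball c r) \<le> ennreal (K * m / m)"
        using m m0 K0 by (intro div_le) auto
      also have "\<dots> \<le> ennreal C" using m0 by (simp add: C_def ennreal_leI)
      finally show ?thesis .
    next
      case False
      have "(\<integral>\<^sup>+ y \<in> ball c r. ennreal \<bar>F y\<bar> \<partial>mu) \<le> (\<integral>\<^sup>+ y. ennreal (F y) \<partial>mu)"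
        by (intro nn_integral_mono) (auto simp: indicator_def F_nonneg)
      also have "\<dots> = ennreal I" by (rule I)
      finally have 1: "(\<integral>\<^sup>+ y \<in> ball c r. ennreal \<bar>F y\<bar> \<partial>mu) \<le> ennreal I" .
      have "(d/4)^2 \<le> r^2" using False d by (intro power_mono) auto
      then have "ennreal ((d/4)^2) \<le> emeasure mu (ball c r)" using pos by (meson ennreal_leI order_trans)
      then have "(\<integral>\<^sup>+ y \<in> ball c r. ennreal \<bar>F y\<bar> \<partial>mu) / emeasure mu (ball c r) \<le> ennreal (I / (d/4)^2)"
        using 1 d I(2) by (intro div_le) auto
      also have "\<dots> \<le> ennreal C" by (simp add: C_def ennreal_leI)
      finally show ?thesis .
    qed
    then show "(\<integral>\<^sup>+ y \<in> ball (fst cr) (snd cr). ennreal \<bar>F y\<bar> \<partial>mu) / emeasure mu (ball (fst cr) (snd cr)) \<le> ennreal C"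
      by (simp only: cr(1) fst_conv snd_conv)
  qed
  then show ?thesis by (rule le_less_trans) simp
qed




lemma lborel_ball_le: fixes c :: "real \<times> real" assumes "0 < r" shows "emeasure lborel (ball c r) \<le> ennreal (4 * r^2)"
proof -
  let ?S = "{fst c - r..fst c + r} \<times> {snd c - r..snd c + r}"
  have sub: "ball c r \<subseteq> ?S"
  proof
    fix y assume "y \<in> ball c r"
    then have "(fst c - fst y)^2 + (snd c - snd y)^2 < r^2" by (simp add: dist_sq)
    then have "(fst c - fst y)^2 \<le> r^2" "(snd c - snd y)^2 \<le> r^2"
      by (smt (verit) zero_le_power2)+
    then have "\<bar>fst c - fst y\<bar> \<le> r" "\<bar>snd c - snd y\<bar> \<le> r" using assms by (auto intro: sq_le')
    then show "y \<in> ?S" by (cases y) auto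
  qed
  have "emeasure lborel (ball c r) \<le> emeasure lborel ?S"
    by (rule emeasure_mono[OF sub]) (simp only: sets_lborel, intro borel_closed closed_Times, auto)
  also have "\<dots> = ennreal (4 * r^2)" using assms by (simp add: rect_lborel power2_eq_square)
  finally show ?thesis .
qed

lemma on_inf:
  assumes "x \<in> segA"
  shows "maxfun mu F x = \<infinity>"
proof -
  have xs0: "snd x = 0 \<and> 0 \<le> fst x \<and> fst x \<le> 1" using assms by (simp only: segA_iff)
  then have xs: "snd x = 0" "0 \<le> fst x" "fst x \<le> 1" by simp_all
  define t where "t = fst x"
  have x: "x = (t,0)" "0 \<le> t" "t \<le> 1" using xs unfolding t_def by (cases x, simp)+
  have main: "ennreal (real n + 1) \<le> maxfun mu F x" for n
  proof -
    define q where "q = 24 * (real n + 1)"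
    define r where "r = 1 / (2 * q^2)"
    have q: "q \<ge> 24" by (simp add: q_def)
    have q2: "q^2 \<ge> 576" using power_mono[OF q, of 2] by simp
    have r0: "0 < r" using q by (simp add: r_def)
    have r1: "r \<le> 1/1152" unfolding r_def using q2 frac_le[of 1 1 1152 "2*q^2"] by simp
    have r2: "2 * r = 1 / q^2" by (simp add: r_def)
    have r4: "r^4 < r^2"
    proof -
      have "r^2 < 1" using r0 r1 by (simp add: power_less_one_iff abs_less_iff)
      then have "r^2 * r^2 < 1 * r^2" using r0 by (intro mult_strict_right_mono) auto
      then show ?thesis by (simp add: power_numeral_reduce eval_nat_numeral)
    qed
    define h where "h = sqrt (r^2 - r^4)"
    have hsq: "h^2 = r^2 - r^4" unfolding h_def using r4 by simp
    have h0: "0 < h" unfolding h_def using r4 by simp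
    have hr: "h < r"
    proof -
      have "h < sqrt (r^2)" unfolding h_def using r0 r4 by (intro real_sqrt_less_mono) simp
      then show ?thesis using r0 by simp
    qed
    have hr2: "r/2 < h"
    proof -
      have "r * r \<le> 1 * r" using r0 r1 by (intro mult_right_mono) auto
      then have "r^2 < 3/4" using r1 by (simp add: power2_eq_square)
      then have "r^2 * r^2 < 3/4 * r^2" using r0 by (intro mult_strict_right_mono) auto
      then have "(r/2)^2 < h^2" unfolding hsq by (simp add: power_divide power_numeral_reduce eval_nat_numeral)
      then show ?thesis using h0 by (meson power_less_imp_less_base less_imp_le)
    qed
    define c where "c = (t, h)"
    have xin: "x \<in> ball c r" unfolding c_def x using h0 hr r0 by (simp add: dist_sq power_strict_mono)
    define R where "R = {max 0 (t - r/4)..min 1 (t + r/4)} \<times> {h - r/2..h + r/2}"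
    have Rsub: "R \<subseteq> ball c r"
    proof
      fix y assume "y \<in> R"
      then have "\<bar>t - fst y\<bar> \<le> r/4" "\<bar>h - snd y\<bar> \<le> r/2" by (auto simp: R_def mem_Times_iff abs_if)
      then have "(t - fst y)^2 \<le> (r/4)^2" "(h - snd y)^2 \<le> (r/2)^2" by (auto intro: sq_le)
      moreover have "(r/2)^2 = r^2/4" "(r/4)^2 = r^2/16" by (simp_all add: power_divide)
      moreover have "0 < r^2" using r0 by simp
      ultimately have "(t - fst y)^2 + (h - snd y)^2 < r^2" by linarith
      then show "y \<in> ball c r" using r0 by (simp add: dist_sq c_def)
    qed
    have RF: "q \<le> F y" if "y \<in> R" for y
    proof -
      have y: "0 \<le> fst y" "fst y \<le> 1" "h - r/2 \<le> snd y" "snd y \<le> h + r/2"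
        using that by (auto simp: R_def mem_Times_iff)
      have s0: "0 < snd y" using y hr2 by linarith
      have s1: "snd y \<le> 2 * r" using y hr by linarith
      then have s2: "snd y \<le> 1" using r1 by linarith
      have "F y = 1 / sqrt (snd y)" using y s0 s2 by (simp add: F_def G_def)
      moreover have "sqrt (snd y) \<le> sqrt (1 / q^2)" using s1 r2 by (intro real_sqrt_le_mono) linarith
      moreover have "sqrt (1 / q^2) = 1 / q" using q by (simp add: real_sqrt_divide)
      ultimately have "1 / (1/q) \<le> F y" using s0 q by (metis frac_le less_eq_real_def order_refl real_sqrt_gt_zero zero_less_one)
      then show ?thesis using q by simp
    qed
    have Rm: "ennreal (r^2/4) \<le> emeasure lborel R"
    proof -
      have L: "r/4 \<le> min 1 (t + r/4) - max 0 (t - r/4)" using x r1 r0 by (auto simp: min_def max_def)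
      have "emeasure lborel R = ennreal ((min 1 (t + r/4) - max 0 (t - r/4)) * ((h + r/2) - (h - r/2)))"
        unfolding R_def using L r0 x(2,3) by (intro rect_lborel) auto
      moreover have "r/4 * r \<le> (min 1 (t + r/4) - max 0 (t - r/4)) * r"
        using L r0 by (intro mult_right_mono) auto
      ultimately show ?thesis by (simp add: power2_eq_square ennreal_leI)
    qed
    have Rsets: "R \<in> sets borel" unfolding R_def by (intro borel_closed closed_Times) auto
    have N: "ennreal (q * (r^2/4)) \<le> (\<integral>\<^sup>+ y \<in> ball c r. ennreal \<bar>F y\<bar> \<partial>mu)"
    proof -
      have "ennreal (q * (r^2/4)) = ennreal q * ennreal (r^2/4)" by (rule ennreal_mult) (use q in auto)
      also have "\<dots> \<le> ennreal q * emeasure lborel R" by (intro mult_left_mono Rm) auto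
      also have "\<dots> \<le> ennreal q * emeasure mu R" using Rsets by (intro mult_left_mono) (auto simp: emeasure_mu)
      also have "\<dots> = (\<integral>\<^sup>+ y. ennreal q * indicator R y \<partial>mu)"
        using Rsets by (simp add: nn_integral_cmult_indicator)
      also have "\<dots> \<le> (\<integral>\<^sup>+ y \<in> ball c r. ennreal \<bar>F y\<bar> \<partial>mu)"
      proof (intro nn_integral_mono)
        fix y
        show "ennreal q * indicator R y \<le> ennreal \<bar>F y\<bar> * indicator (ball c r) y"
        proof (cases "y \<in> R")
          case True
          then show ?thesis using Rsub RF[OF True] F_nonneg[of y] by (auto simp: ennreal_leI)
        qed simp
      qed
      finally show ?thesis .
    qed
    have Dm: "emeasure mu (ball c r) \<le> ennreal (6 * r^2)"
    proof -
      have 1: "emeasure lborel (ball c r) \<le> ennreal (4 * r^2)" by (rule lborel_ball_le[OF r0])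
      have sub: "{s\<in>{0..1}. (s,0::real) \<in> ball c r} \<subseteq> {t - r^2..t + r^2}"
      proof
        fix s assume "s \<in> {s\<in>{0..1}. (s,0::real) \<in> ball c r}"
        then have "(t - s)^2 + h^2 < r^2" by (simp add: dist_sq c_def)
        then have "(t - s)^2 < (r^2)^2" unfolding hsq by (simp add: power_numeral_reduce eval_nat_numeral)
        then have "\<bar>t - s\<bar>^2 < (r^2)^2" by simp
        then have "\<bar>t - s\<bar> < r^2" by (rule power_less_imp_less_base) simp
        then show "s \<in> {t - r^2..t + r^2}" by (auto simp: abs_if split: if_splits)
      qed
      have "emeasure lambda1 (ball c r) = emeasure lborel {s\<in>{0..1}. (s,0::real) \<in> ball c r}"
        by (rule emeasure_lambda1) simp
      also have "\<dots> \<le> emeasure lborel {t - r^2..t + r^2}" by (rule emeasure_mono[OF sub]) simp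
      also have "\<dots> = ennreal (2 * r^2)" by simp
      finally have 2: "emeasure lambda1 (ball c r) \<le> ennreal (2 * r^2)" .
      have "emeasure mu (ball c r) = emeasure lborel (ball c r) + emeasure lambda1 (ball c r)"
        by (simp add: emeasure_mu)
      also have "\<dots> \<le> ennreal (4 * r^2) + ennreal (2 * r^2)" using 1 2 by (rule add_mono)
      also have "\<dots> = ennreal (6 * r^2)" by (simp add: ennreal_plus[symmetric] del: ennreal_plus)
      finally show ?thesis .
    qed
    have ne: "emeasure mu (ball c r) \<noteq> 0"
      using mu_ball_ge[OF r0, of c] r0 by (metis ennreal_eq_0_iff le_zero_eq not_le zero_less_power)
    have "ennreal (q * (r^2/4) / (6 * r^2)) \<le> (\<integral>\<^sup>+ y \<in> ball c r. ennreal \<bar>F y\<bar> \<partial>mu) / emeasure mu (ball c r)"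
      using N Dm ne q r0 by (intro div_ge) auto
    moreover have "q * (r^2/4) / (6 * r^2) = real n + 1" using r0 by (simp add: q_def field_simps)
    moreover have "(\<integral>\<^sup>+ y \<in> ball c r. ennreal \<bar>F y\<bar> \<partial>mu) / emeasure mu (ball c r) \<le> maxfun mu F x"
      unfolding maxfun_def
      by (rule SUP_upper2[where i="(c, r)"]) (use r0 xin in auto)
    ultimately show ?thesis by (metis order_trans)
  qed
  show ?thesis
  proof (rule ccontr)
    assume "maxfun mu F x \<noteq> \<infinity>"
    then obtain a where a: "maxfun mu F x = ennreal a" "0 \<le> a" by (cases "maxfun mu F x") auto
    obtain n :: nat where "a < real n" using reals_Archimedean2 by blast
    have "ennreal (real n + 1) \<le> ennreal a" using main[of n] a by simp
    then have "real n + 1 \<le> a" using a(2) ennreal_le_iff by blast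
    then show False using \<open>a < real n\<close> by linarith
  qed
qed




theorem mainTheorem20:
  shows "(\<exists>f :: real \<times> real \<Rightarrow> real. integrable mu f \<and>
            (\<exists>K. compact K \<and> (\<forall>x. x \<notin> K \<longrightarrow> f x = 0)) \<and>
            {x. maxfun mu f x = \<infinity>} = segA)
         \<and> \<not> dichotomy mu"
proof -
  have S: "{x. maxfun mu F x = \<infinity>} = segA"
  proof
    show "{x. maxfun mu F x = \<infinity>} \<subseteq> segA"
      using off_bound by (metis (mono_tags, lifting) mem_Collect_eq order_less_irrefl subsetI)
    show "segA \<subseteq> {x. maxfun mu F x = \<infinity>}" using on_inf by blast
  qed
  have K: "compact ({0..1::real} \<times> {0..1::real}) \<and> (\<forall>x. x \<notin> {0..1::real} \<times> {0..1::real} \<longrightarrow> F x = 0)"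
    by (auto intro!: compact_Times compact_Icc simp: F_def G_def mem_Times_iff)
  have 1: "\<exists>f :: real \<times> real \<Rightarrow> real. integrable mu f \<and>
            (\<exists>K. compact K \<and> (\<forall>x. x \<notin> K \<longrightarrow> f x = 0)) \<and>
            {x. maxfun mu f x = \<infinity>} = segA"
    using F_integrable K S by blast
  have 2: "\<not> dichotomy mu"
  proof
    assume "dichotomy mu"
    moreover have "\<forall>c r. set_integrable mu (ball c r) F"
      unfolding set_integrable_def using F_integrable by (intro allI integrable_mult_indicator) auto
    ultimately have D: "emeasure mu {x \<in> space mu. maxfun mu F x = \<infinity>} = 0 \<or> (\<forall>x. maxfun mu F x = \<infinity>)"
      unfolding dichotomy_def by blast
    have "emeasure lambda1 segA = emeasure lborel {t\<in>{0..1}. (t,0::real) \<in> segA}"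
      by (rule emeasure_lambda1[OF segA_sets])
    also have "{t\<in>{0..1}. (t,0::real) \<in> segA} = {0..1}" by (auto simp: segA_iff)
    finally have l1: "emeasure lambda1 segA = 1" by simp
    have "emeasure mu {x \<in> space mu. maxfun mu F x = \<infinity>} = emeasure mu segA" using S by simp
    also have "\<dots> = emeasure lborel segA + emeasure lambda1 segA" by (rule emeasure_mu[OF segA_sets])
    finally have "emeasure mu {x \<in> space mu. maxfun mu F x = \<infinity>} \<noteq> 0" using l1 by simp
    moreover have "maxfun mu F (5,5) \<noteq> \<infinity>"
      using off_bound[of "(5,5)"] by (simp add: segA_iff)
    ultimately show False using D by blast
  qed
  show ?thesis using 1 2 by blast
qed


end
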